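(* Let $n\ge1$, $m>1$, $a\in\mathbb{R}^n$, $d\in\mathbb{R}^m$ with $\|a\|\le\|d\|$, $S_{\le0}=\{(x,y)\in\mathbb{R}^{n+m}:\|x\|\le\|y\|,\ a^\mathsf{T} x+d^\mathsf{T} y\le0\}$, and $\lambda\in\mathbb{R}^n$ with $\|\lambda\|=1$. Let $C_\lambda=\{(x,y):\lambda^\mathsf{T} x\ge\|y\|\}$, $G(\lambda)=\{\beta\in\mathbb{R}^m:\|\beta\|=1,\ a^\mathsf{T}\lambda+d^\mathsf{T}\beta\le0\}$ and $C_{G(\lambda)}=\{(x,y):-\lambda^\mathsf{T} x+\beta^\mathsf{T} y\le0\ \forall\beta\in G(\lambda)\}$. If $C_{G(\lambda)}\neq\emptyset$ and $C$ is any $S_{\le0}$-free convex set with $C_\lambda\subseteq C$, then $C\subseteq C_{G(\lambda)}$.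
   Context: $\|\cdot\|$ is the Euclidean norm. A convex set $C$ is $S$-free if $\operatorname{int}(C)\cap S=\emptyset$. *)

theory Defs
  imports "HOL-Analysis.Analysis"
begin

definition S_free :: "'a::real_normed_vector set \<Rightarrow> 'a set \<Rightarrow> bool" where
  "S_free S C \<longleftrightarrow> convex C \<and> interior C \<inter> S = {}"

end

theory Submission imports Defs "HOL-Analysis.Analysis" begin

lemma norm_add_sq: fixes u v :: "'a::real_inner"
  shows "(norm (u + v))\<^sup>2 = (norm u)\<^sup>2 + 2 * (u \<bullet> v) + (norm v)\<^sup>2"
  by (simp add: power2_norm_eq_inner inner_add_left inner_add_right inner_commute)

lemma norm_diff_sq: fixes u v :: "'a::real_inner"
  shows "(norm (u - v))\<^sup>2 = (norm u)\<^sup>2 - 2 * (u \<bullet> v) + (norm v)\<^sup>2"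
  by (simp add: power2_norm_eq_inner inner_diff_left inner_diff_right inner_commute)

lemma half_mid: fixes u v :: "'a::real_vector"
  shows "u - (1/2::real) *\<^sub>R (u - v) = (1/2::real) *\<^sub>R (u + v)"
proof -
  have "u = (1/2::real) *\<^sub>R u + (1/2::real) *\<^sub>R u" by (metis scaleR_add_left scaleR_one field_sum_of_halves)
  then show ?thesis by (metis add_diff_cancel_left' diff_add_eq scaleR_add_right scaleR_diff_right add.commute)
qed

lemma key:
  fixes a l x :: "real ^ 'n" and d g y :: "real ^ 'm" and C :: "((real ^ 'n) \<times> (real ^ 'm)) set"
  assumes nl: "norm l = 1" and ng: "norm g = 1"
    and fr: "S_free {(x, y). norm x \<le> norm y \<and> a \<bullet> x + d \<bullet> y \<le> 0} C"
    and sub: "{(x, y). l \<bullet> x \<ge> norm y} \<subseteq> C"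
    and zi: "(x, y) \<in> interior C"
    and gy: "g \<bullet> y > l \<bullet> x"
    and f0: "a \<bullet> l + d \<bullet> g \<le> 0"
    and alt: "a \<bullet> l + d \<bullet> g < 0 \<or> a \<bullet> x + d \<bullet> y \<le> 0"
  shows False
proof -
  define q where "q = g \<bullet> y - l \<bullet> x"
  define f where "f = a \<bullet> l + d \<bullet> g"
  define e where "e = a \<bullet> x + d \<bullet> y"
  have q: "q > 0" using gy q_def by simp
  define t where "t = max 0 (max (((norm x)\<^sup>2 - (norm y)\<^sup>2) / (2*q)) (if f < 0 then e / (- f) else 0))"
  have t0: "t \<ge> 0" unfolding t_def by simp
  have t1: "(norm x)\<^sup>2 - (norm y)\<^sup>2 \<le> 2 * t * q"
  proof -
    have "((norm x)\<^sup>2 - (norm y)\<^sup>2) / (2*q) \<le> t" unfolding t_def by simp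
    then have "(norm x)\<^sup>2 - (norm y)\<^sup>2 \<le> t * (2*q)" using q by (simp add: pos_divide_le_eq)
    then show ?thesis by (simp add: mult.commute mult.left_commute)
  qed
  have t2: "e + t * f \<le> 0"
  proof (cases "f < 0")
    case True
    then have "e / (- f) \<le> t" unfolding t_def by simp
    then have "e / (- f) * (- f) \<le> t * (- f)" using True by (intro mult_right_mono) auto
    then have "e \<le> t * (- f)" using True by simp
    then show ?thesis by simp
  next
    case False
    then have "f = 0" "e \<le> 0" using alt f0 f_def e_def by auto
    then show ?thesis by simp
  qed
  have cv: "convex C" and dis: "interior C \<inter> {(x, y). norm x \<le> norm y \<and> a \<bullet> x + d \<bullet> y \<le> 0} = {}"
    using fr unfolding S_free_def by auto
  define w where "w = (t *\<^sub>R l, t *\<^sub>R g)"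
  have "l \<bullet> l = 1" using nl by (simp add: norm_eq_1)
  then have "l \<bullet> (t *\<^sub>R l) \<ge> norm (t *\<^sub>R g)" using t0 ng by simp
  then have "w \<in> C" using sub unfolding w_def by auto
  then have "w - (1/2) *\<^sub>R (w - (x,y)) \<in> interior C"
    using mem_interior_convex_shrink[OF cv zi] by simp
  moreover have "w - (1/2) *\<^sub>R (w - (x,y)) = ((1/2) *\<^sub>R (t *\<^sub>R l + x), (1/2) *\<^sub>R (t *\<^sub>R g + y))"
    unfolding w_def by (simp only: half_mid scaleR_Pair add_Pair)
  moreover have "norm ((1/2::real) *\<^sub>R (t *\<^sub>R l + x)) \<le> norm ((1/2::real) *\<^sub>R (t *\<^sub>R g + y))"
  proof -
    have "(norm (t *\<^sub>R l + x))\<^sup>2 = t^2 + 2 * t * (l \<bullet> x) + (norm x)\<^sup>2"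
      using nl norm_add_sq[of "t *\<^sub>R l" x] by (simp add: power_mult_distrib)
    moreover have "(norm (t *\<^sub>R g + y))\<^sup>2 = t^2 + 2 * t * (g \<bullet> y) + (norm y)\<^sup>2"
      using ng norm_add_sq[of "t *\<^sub>R g" y] by (simp add: power_mult_distrib)
    moreover have "2*t*q = 2*t*(g \<bullet> y) - 2*t*(l \<bullet> x)" unfolding q_def by (simp add: right_diff_distrib)
    ultimately have "(norm (t *\<^sub>R l + x))\<^sup>2 \<le> (norm (t *\<^sub>R g + y))\<^sup>2"
      using t1 by linarith
    then have "norm (t *\<^sub>R l + x) \<le> norm (t *\<^sub>R g + y)"
      by (rule power2_le_imp_le) simp
    then show ?thesis by simp
  qed
  moreover have "a \<bullet> ((1/2::real) *\<^sub>R (t *\<^sub>R l + x)) + d \<bullet> ((1/2::real) *\<^sub>R (t *\<^sub>R g + y)) \<le> 0"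
  proof -
    have "a \<bullet> ((1/2::real) *\<^sub>R (t *\<^sub>R l + x)) + d \<bullet> ((1/2::real) *\<^sub>R (t *\<^sub>R g + y)) = (e + t * f) / 2"
      unfolding e_def f_def by (simp add: inner_add_right inner_scaleR_right field_simps)
    then show ?thesis using t2 by simp
  qed
  ultimately have "((1/2::real) *\<^sub>R (t *\<^sub>R l + x), (1/2::real) *\<^sub>R (t *\<^sub>R g + y)) \<in> interior C \<inter> {(x, y). norm x \<le> norm y \<and> a \<bullet> x + d \<bullet> y \<le> 0}"
    by simp
  then show False using dis by simp
qed

lemma pert:
  fixes b d y :: "real ^ 'm"
  assumes m: "CARD('m) > 1" and nb: "norm b = 1" and d0: "d \<noteq> 0"
    and db: "d \<bullet> b \<noteq> - norm d" and hby: "b \<bullet> y > k"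
  shows "\<exists>g. norm g = 1 \<and> d \<bullet> g < d \<bullet> b \<and> g \<bullet> y > k"
proof -
  have bb: "b \<bullet> b = 1" using nb by (simp add: norm_eq_1)
  obtain w where nw: "norm w = 1" and bw: "b \<bullet> w = 0" and dw: "d \<bullet> w \<le> 0"
    and alt: "d \<bullet> w < 0 \<or> d \<bullet> b > 0"
  proof (cases "d - (d \<bullet> b) *\<^sub>R b = 0")
    case False
    define r where "r = d - (d \<bullet> b) *\<^sub>R b"
    have br: "b \<bullet> r = 0" unfolding r_def using bb by (simp add: inner_diff_right inner_commute)
    have "r \<bullet> r = d \<bullet> r" unfolding r_def using br[unfolded r_def]
      by (simp add: inner_diff_left inner_commute)
    then have dr: "d \<bullet> r = (norm r)\<^sup>2" by (simp add: power2_norm_eq_inner)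
    have rn: "norm r > 0" using False r_def by simp
    define w where "w = - (1 / norm r) *\<^sub>R r"
    have "norm w = 1" using rn unfolding w_def by simp
    moreover have "b \<bullet> w = 0" unfolding w_def using br by simp
    moreover have "d \<bullet> w = - norm r" unfolding w_def using dr rn by (simp add: power2_eq_square)
    ultimately show ?thesis using that rn by auto
  next
    case True
    then have deq: "d = (d \<bullet> b) *\<^sub>R b" by simp
    then have "norm d = \<bar>d \<bullet> b\<bar>" using nb by (metis norm_scaleR mult.right_neutral)
    then have dbpos: "d \<bullet> b > 0" using db d0 by (cases "d \<bullet> b \<ge> 0") auto
    have "2 \<le> DIM(real ^ 'm)" using m by simp
    then obtain v :: "real ^ 'm" where v0: "v \<noteq> 0" and ov: "orthogonal b v"
      using orthogonal_to_vector_exists by blast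
    define w where "w = (1 / norm v) *\<^sub>R v"
    have "norm w = 1" using v0 unfolding w_def by simp
    moreover have "b \<bullet> w = 0" using ov unfolding w_def orthogonal_def by simp
    moreover have "d \<bullet> w = 0" using deq \<open>b \<bullet> w = 0\<close>
      by (metis inner_commute inner_scaleR_left mult_zero_right)
    ultimately show ?thesis using that dbpos by auto
  qed
  have ww: "w \<bullet> w = 1" using nw by (simp add: norm_eq_1)
  define G where "G = (\<lambda>t::real. cos t *\<^sub>R b + sin t *\<^sub>R w)"
  have nG: "norm (G t) = 1" for t
  proof -
    have "G t \<bullet> G t = (cos t)\<^sup>2 + (sin t)\<^sup>2"
      unfolding G_def using bb ww bw
      by (simp add: inner_add_left inner_add_right inner_commute power2_eq_square)
    then show ?thesis by (simp add: norm_eq_1)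
  qed
  have Gy: "G t \<bullet> y = cos t * (b \<bullet> y) + sin t * (w \<bullet> y)" for t
    unfolding G_def by (simp add: inner_add_left)
  have Gd: "d \<bullet> G t = cos t * (d \<bullet> b) + sin t * (d \<bullet> w)" for t
    unfolding G_def by (simp add: inner_add_right)
  have "((\<lambda>t. cos t * (b \<bullet> y) + sin t * (w \<bullet> y)) \<longlongrightarrow> cos 0 * (b \<bullet> y) + sin 0 * (w \<bullet> y)) (at 0)"
    by (intro tendsto_intros)
  then have "((\<lambda>t. cos t * (b \<bullet> y) + sin t * (w \<bullet> y)) \<longlongrightarrow> b \<bullet> y) (at 0)" by simp
  then have "eventually (\<lambda>t. cos t * (b \<bullet> y) + sin t * (w \<bullet> y) > k) (at 0)"
    using hby order_tendstoD(1) by blast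
  then obtain e1 where e1: "e1 > 0" and he1: "\<And>t. t \<noteq> 0 \<Longrightarrow> dist t 0 < e1 \<Longrightarrow> cos t * (b \<bullet> y) + sin t * (w \<bullet> y) > k"
    unfolding eventually_at by blast
  obtain e2 where e2: "e2 > 0" and he2: "\<And>h. h > 0 \<Longrightarrow> h < e2 \<Longrightarrow> cos h * (d \<bullet> b) + sin h * (d \<bullet> w) < d \<bullet> b"
  proof (cases "d \<bullet> w < 0")
    case True
    have "((\<lambda>t. cos t * (d \<bullet> b) + sin t * (d \<bullet> w)) has_real_derivative (- sin 0 * (d \<bullet> b) + cos 0 * (d \<bullet> w))) (at 0)"
      by (auto intro!: derivative_eq_intros)
    then have "((\<lambda>t. cos t * (d \<bullet> b) + sin t * (d \<bullet> w)) has_real_derivative (d \<bullet> w)) (at 0)" by simp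
    from DERIV_neg_dec_right[OF this True] obtain e where "e > 0"
      "\<forall>h>0. h < e \<longrightarrow> cos (0 + h) * (d \<bullet> b) + sin (0 + h) * (d \<bullet> w) < cos 0 * (d \<bullet> b) + sin 0 * (d \<bullet> w)"
      by blast
    then show ?thesis using that[of e] by auto
  next
    case False
    then have dw0: "d \<bullet> w = 0" and dbp: "d \<bullet> b > 0" using dw alt by auto
    have "cos h * (d \<bullet> b) + sin h * (d \<bullet> w) < d \<bullet> b" if "h > 0" "h < 1" for h
    proof -
      have "cos h < cos 0" using that pi_gt3 by (intro cos_monotone_0_pi) auto
      then show ?thesis using dw0 dbp by simp
    qed
    then show ?thesis using that[of 1] by auto
  qed
  define t where "t = min e1 e2 / 2"
  have t: "t > 0" "t < e1" "t < e2" unfolding t_def using e1 e2 by auto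
  show ?thesis
  proof (intro exI conjI)
    show "norm (G t) = 1" by (rule nG)
    show "d \<bullet> G t < d \<bullet> b" using Gd he2 t by simp
    show "G t \<bullet> y > k" using Gy he1[of t] t by simp
  qed
qed

theorem proposition1:
  fixes a l :: "real ^ 'n" and d :: "real ^ 'm" and C :: "((real ^ 'n) \<times> (real ^ 'm)) set"
  assumes "CARD('m) > 1"
    and "norm a \<le> norm d"
    and "norm l = 1"
    and "{(x, y). \<forall>\<beta> \<in> {\<beta>. norm \<beta> = 1 \<and> a \<bullet> l + d \<bullet> \<beta> \<le> 0}. - (l \<bullet> x) + \<beta> \<bullet> y \<le> 0} \<noteq> {}"
    and "S_free {(x, y). norm x \<le> norm y \<and> a \<bullet> x + d \<bullet> y \<le> 0} C"
    and "{(x, y). l \<bullet> x \<ge> norm y} \<subseteq> C"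
  shows "C \<subseteq> {(x, y). \<forall>\<beta> \<in> {\<beta>. norm \<beta> = 1 \<and> a \<bullet> l + d \<bullet> \<beta> \<le> 0}. - (l \<bullet> x) + \<beta> \<bullet> y \<le> 0}"
proof -
  note m = assms(1) and ad = assms(2) and nl = assms(3) and fr = assms(5) and sub = assms(6)
  have cv: "convex C" using fr unfolding S_free_def by auto
  have ll: "l \<bullet> l = 1" using nl by (simp add: norm_eq_1)
  define U where "U = {p :: (real ^ 'n) \<times> (real ^ 'm). norm (snd p) < l \<bullet> fst p}"
  have "open U" unfolding U_def
    by (intro open_Collect_less continuous_intros)
  moreover have "U \<subseteq> C" using sub unfolding U_def by auto
  moreover have "(l, 0) \<in> U" unfolding U_def using ll by simp
  ultimately have "(l, 0) \<in> interior C" using interior_maximal by blast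
  then have intne: "interior C \<noteq> {}" by blast
  have main: "b \<bullet> y0 \<le> l \<bullet> x0" if "(x0, y0) \<in> C" "norm b = 1" "a \<bullet> l + d \<bullet> b \<le> 0" for x0 y0 b
  proof -
    note nb = that(2) and f0 = that(3)
    define H where "H = {p :: (real ^ 'n) \<times> (real ^ 'm). b \<bullet> snd p \<le> l \<bullet> fst p}"
    have cH: "closed H" unfolding H_def by (intro closed_Collect_le continuous_intros)
    have "interior C \<subseteq> H"
    proof
      fix p assume pC: "p \<in> interior C"
      obtain x y where p: "p = (x, y)" by (cases p)
      show "p \<in> H"
      proof (rule ccontr)
        assume "p \<notin> H"
        then have gy: "b \<bullet> y > l \<bullet> x" unfolding H_def p by simp
        have xyC: "(x, y) \<in> interior C" using pC p by simp
        show False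
        proof (cases "a \<bullet> l + d \<bullet> b < 0 \<or> a \<bullet> x + d \<bullet> y \<le> 0")
          case True
          then show False using key[OF nl nb fr sub xyC gy f0] by blast
        next
          case False
          then have f: "a \<bullet> l + d \<bullet> b = 0" and e: "a \<bullet> x + d \<bullet> y > 0" using f0 by auto
          have d0: "d \<noteq> 0"
          proof
            assume "d = 0"
            then have "a = 0" using ad by simp
            then show False using e \<open>d = 0\<close> by simp
          qed
          have db: "d \<bullet> b \<noteq> - norm d"
          proof
            assume h: "d \<bullet> b = - norm d"
            then have al: "a \<bullet> l = norm d" using f by simp
            have "(norm (a - norm d *\<^sub>R l))\<^sup>2 = (norm a)\<^sup>2 - 2 * norm d * (a \<bullet> l) + (norm d)\<^sup>2"
              using nl norm_diff_sq[of a "norm d *\<^sub>R l"] by (simp add: power_mult_distrib)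
            also have "\<dots> \<le> 0" using al ad by (simp add: power2_eq_square) (smt (verit) mult_mono norm_ge_zero)
            finally have "a = norm d *\<^sub>R l" by simp
            moreover have "(norm (d + norm d *\<^sub>R b))\<^sup>2 = (norm d)\<^sup>2 + 2 * norm d * (d \<bullet> b) + (norm d)\<^sup>2"
              using nb norm_add_sq[of d "norm d *\<^sub>R b"] by (simp add: power_mult_distrib)
            then have "(norm (d + norm d *\<^sub>R b))\<^sup>2 = 0" using h by (simp add: power2_eq_square)
            then have hd: "d = - (norm d *\<^sub>R b)" by (simp add: add_eq_0_iff)
            have "d \<bullet> y = - (norm d * (b \<bullet> y))"
              using arg_cong[of d "- (norm d *\<^sub>R b)" "\<lambda>v. v \<bullet> y", OF hd] by simp
            ultimately have "a \<bullet> x + d \<bullet> y = norm d * (l \<bullet> x - b \<bullet> y)"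
              by (simp add: algebra_simps)
            moreover have "norm d * (l \<bullet> x - b \<bullet> y) \<le> 0" using gy by (simp add: mult_nonneg_nonpos)
            ultimately show False using e by simp
          qed
          obtain g where ng: "norm g = 1" and dg: "d \<bullet> g < d \<bullet> b" and gy2: "g \<bullet> y > l \<bullet> x"
            using pert[OF m nb d0 db gy] by blast
          have "a \<bullet> l + d \<bullet> g < 0" using f dg by simp
          then show False using key[OF nl ng fr sub xyC gy2] by simp
        qed
      qed
    qed
    then have "closure (interior C) \<subseteq> H" using cH closure_minimal by blast
    then have "closure C \<subseteq> H" using convex_closure_interior[OF cv intne] by simp
    then have "(x0, y0) \<in> H" using that(1) closure_subset by blast
    then show ?thesis unfolding H_def by simp
  qed
  show ?thesis using main by auto
qed

end
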